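(* Let $\mathcal{P}_n$ be a geometric lattice of rank two with $n$ atoms (the lattice of flats of the uniform matroid $U_{2,n}$). Then $\mathcal{M}(\mathcal{P}_n,t)=(t^2-nt+1)(t+1)^2(t-1)^2$.
   Context: $\mathcal{P}_n$ consists of $\hat 0$ (rank 0), $n$ atoms (rank 1) and $\hat 1$ (rank 2). For a finite ranked poset $\mathcal{P}$, $\mathrm{rk}(\mathcal{P})$ is the maximum rank and $\rho(x,y,z)=3\,\mathrm{rk}(\mathcal{P})-\mathrm{rk}(x)-\mathrm{rk}(y)-\mathrm{rk}(z)$. Let $\delta_3(x,y,z)=1$ if $x=y=z$ and $0$ otherwise, and $J$ the unique integer-valued function on triples $x\le y\le z$ with $\sum_{x\le a\le y\le b\le z}J(a,y,b)=\delta_3(x,y,z)$ for all $x\le y\le z$. Then $\mathcal{M}(\mathcal{P},t)=\sum_{x\le y\le z}J(x,y,z)\,t^{\rho(x,y,z)}$. *)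

theory Defs
  imports "HOL-Computational_Algebra.Polynomial"
begin

definition chains3 :: "'a set \<Rightarrow> ('a \<Rightarrow> 'a \<Rightarrow> bool) \<Rightarrow> ('a \<times> 'a \<times> 'a) set" where
  "chains3 S le = {(x,y,z). x \<in> S \<and> y \<in> S \<and> z \<in> S \<and> le x y \<and> le y z}"

definition delta3 :: "'a \<Rightarrow> 'a \<Rightarrow> 'a \<Rightarrow> int" where
  "delta3 x y z = (if x = y \<and> y = z then 1 else 0)"

text \<open>f satisfies the defining recursion of J on all triples x \<le> y \<le> z
  (and is normalised to 0 off such triples, where J is not defined).\<close>
definition is_J :: "'a set \<Rightarrow> ('a \<Rightarrow> 'a \<Rightarrow> bool) \<Rightarrow> ('a \<Rightarrow> 'a \<Rightarrow> 'a \<Rightarrow> int) \<Rightarrow> bool" where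
  "is_J S le f \<longleftrightarrow>
     (\<forall>x y z. (x,y,z) \<notin> chains3 S le \<longrightarrow> f x y z = 0) \<and>
     (\<forall>x y z. (x,y,z) \<in> chains3 S le \<longrightarrow>
        (\<Sum>(a,b)\<in>{(a,b). a \<in> S \<and> b \<in> S \<and> le x a \<and> le a y \<and> le y b \<and> le b z}. f a y b)
          = delta3 x y z)"

definition J_fun :: "'a set \<Rightarrow> ('a \<Rightarrow> 'a \<Rightarrow> bool) \<Rightarrow> 'a \<Rightarrow> 'a \<Rightarrow> 'a \<Rightarrow> int" where
  "J_fun S le = (THE f. is_J S le f)"

definition max_rank :: "'a set \<Rightarrow> ('a \<Rightarrow> nat) \<Rightarrow> nat" where
  "max_rank S rk = Max (rk ` S)"

definition M_poly :: "'a set \<Rightarrow> ('a \<Rightarrow> 'a \<Rightarrow> bool) \<Rightarrow> ('a \<Rightarrow> nat) \<Rightarrow> int poly" where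
  "M_poly S le rk =
     (\<Sum>(x,y,z)\<in>chains3 S le.
        monom (J_fun S le x y z) (3 * max_rank S rk - rk x - rk y - rk z))"

datatype pn_elem = Bot | Atom nat | Top

definition Pn :: "nat \<Rightarrow> pn_elem set" where
  "Pn n = {Bot, Top} \<union> Atom ` {1..n}"

fun pn_le :: "pn_elem \<Rightarrow> pn_elem \<Rightarrow> bool" where
  "pn_le Bot _ = True"
| "pn_le _ Top = True"
| "pn_le (Atom i) (Atom j) = (i = j)"
| "pn_le _ _ = False"

fun pn_rk :: "pn_elem \<Rightarrow> nat" where
  "pn_rk Bot = 0"
| "pn_rk (Atom _) = 1"
| "pn_rk Top = 2"

end

theory Submission
  imports Defs
begin

lemma is_J_unique:
  assumes fin: "finite S"
    and rfl: "\<And>x. x \<in> S \<Longrightarrow> le x x"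
    and antis: "\<And>x y. x \<in> S \<Longrightarrow> y \<in> S \<Longrightarrow> le x y \<Longrightarrow> le y x \<Longrightarrow> x = y"
    and trans: "\<And>x y z. x \<in> S \<Longrightarrow> y \<in> S \<Longrightarrow> z \<in> S \<Longrightarrow> le x y \<Longrightarrow> le y z \<Longrightarrow> le x z"
    and f: "is_J S le f" and g: "is_J S le g"
  shows "f = g"
proof -
  define I where "I x y z = {(a,b). a \<in> S \<and> b \<in> S \<and> le x a \<and> le a y \<and> le y b \<and> le b z}" for x y z
  have finI: "finite (I x y z)" for x y z
    by (rule finite_subset[of _ "S \<times> S"]) (auto simp: I_def fin)
  have main: "f x y z = g x y z" if "(x,y,z) \<in> chains3 S le" for x y z
    using that
  proof (induction "card (I x y z)" arbitrary: x z rule: less_induct)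
    case less
    have ch: "x \<in> S" "y \<in> S" "z \<in> S" "le x y" "le y z" using less.prems by (auto simp: chains3_def)
    have sf: "(\<Sum>(a,b)\<in>I x y z. f a y b) = delta3 x y z" using f less.prems unfolding is_J_def I_def by blast
    have sg: "(\<Sum>(a,b)\<in>I x y z. g a y b) = delta3 x y z" using g less.prems unfolding is_J_def I_def by blast
    have xz: "(x,z) \<in> I x y z" using ch rfl by (auto simp: I_def)
    have rest: "(\<Sum>(a,b)\<in>I x y z - {(x,z)}. f a y b) = (\<Sum>(a,b)\<in>I x y z - {(x,z)}. g a y b)"
    proof (rule sum.cong[OF refl])
      fix p assume p: "p \<in> I x y z - {(x,z)}"
      obtain a b where pab: "p = (a,b)" by (cases p)
      have ab: "a \<in> S" "b \<in> S" "le x a" "le a y" "le y b" "le b z" "(a,b) \<noteq> (x,z)"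
        using p pab by (auto simp: I_def)
      have sub: "I a y b \<subseteq> I x y z" using ab ch trans unfolding I_def by blast
      have nin: "(x,z) \<notin> I a y b"
      proof
        assume "(x,z) \<in> I a y b"
        then have "le a x" "le z b" by (auto simp: I_def)
        then have "a = x" "b = z" using antis ab ch by auto
        then show False using ab by auto
      qed
      have "card (I a y b) < card (I x y z)"
        using sub nin xz finI by (metis psubset_card_mono psubset_eq)
      moreover have "(a,y,b) \<in> chains3 S le" using ab ch by (auto simp: chains3_def)
      ultimately have "f a y b = g a y b" using less.hyps by blast
      then show "(case p of (a,b) \<Rightarrow> f a y b) = (case p of (a,b) \<Rightarrow> g a y b)" using pab by simp
    qed
    have "(\<Sum>(a,b)\<in>I x y z. f a y b) = f x y z + (\<Sum>(a,b)\<in>I x y z - {(x,z)}. f a y b)"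
      using xz finI by (simp add: sum.remove)
    moreover have "(\<Sum>(a,b)\<in>I x y z. g a y b) = g x y z + (\<Sum>(a,b)\<in>I x y z - {(x,z)}. g a y b)"
      using xz finI by (simp add: sum.remove)
    ultimately show ?case using sf sg rest by simp
  qed
  show ?thesis
  proof (intro ext)
    fix x y z
    show "f x y z = g x y z"
    proof (cases "(x,y,z) \<in> chains3 S le")
      case True then show ?thesis by (rule main)
    next
      case False then show ?thesis using f g unfolding is_J_def by auto
    qed
  qed
qed


fun mu :: "nat \<Rightarrow> pn_elem \<Rightarrow> pn_elem \<Rightarrow> int" where
  "mu n Bot Bot = 1"
| "mu n Bot (Atom _) = -1"
| "mu n Bot Top = int n - 1"
| "mu n (Atom i) (Atom j) = (if i = j then 1 else 0)"
| "mu n (Atom _) Top = -1"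
| "mu n Top Top = 1"
| "mu n _ _ = 0"

lemma sum_Pn: "(\<Sum>x\<in>Pn n. h x) = h Bot + h Top + (\<Sum>i=1..n. h (Atom i))"
proof -
  have "Pn n = insert Bot (insert Top (Atom ` {1..n}))" by (auto simp: Pn_def)
  moreover have "sum h (Atom ` {1..n}) = (\<Sum>i=1..n. h (Atom i))"
    by (subst sum.reindex) (auto simp: inj_on_def)
  ultimately show ?thesis by (simp add: image_iff add.assoc)
qed

lemma eq_both: "(a = b \<and> b = a) = (a = b)" by auto

lemma finite_Pn[simp]: "finite (Pn n)" by (simp add: Pn_def)

lemma sum_filter_Pn: "(\<Sum>x\<in>{x\<in>Pn n. P x}. h x) = (\<Sum>x\<in>Pn n. if P x then h x else 0)"
  by (simp add: sum.inter_filter)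

lemma Atom_in_Pn[simp]: "Atom i \<in> Pn n \<longleftrightarrow> 1 \<le> i \<and> i \<le> n"
  by (auto simp: Pn_def)
lemma BT_in_Pn[simp]: "Bot \<in> Pn n" "Top \<in> Pn n"
  by (auto simp: Pn_def)

lemma mu_down: "x \<in> Pn n \<Longrightarrow> y \<in> Pn n \<Longrightarrow> pn_le x y \<Longrightarrow>
   (\<Sum>a\<in>{a\<in>Pn n. pn_le x a \<and> pn_le a y}. mu n a y) = (if x = y then 1 else 0)"
  unfolding sum_filter_Pn sum_Pn
  by (cases x; cases y) (auto simp: sum.delta eq_both)

lemma mu_up: "y \<in> Pn n \<Longrightarrow> z \<in> Pn n \<Longrightarrow> pn_le y z \<Longrightarrow>
   (\<Sum>b\<in>{b\<in>Pn n. pn_le y b \<and> pn_le b z}. mu n y b) = (if y = z then 1 else 0)"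
  unfolding sum_filter_Pn sum_Pn
  by (cases y; cases z) (auto simp: sum.delta eq_both)


definition J0 :: "nat \<Rightarrow> pn_elem \<Rightarrow> pn_elem \<Rightarrow> pn_elem \<Rightarrow> int" where
  "J0 n x y z = (if (x,y,z) \<in> chains3 (Pn n) pn_le then mu n x y * mu n y z else 0)"

lemma J0_is_J: "is_J (Pn n) pn_le (J0 n)"
  unfolding is_J_def
proof (intro conjI allI impI)
  fix x y z assume "(x,y,z) \<notin> chains3 (Pn n) pn_le"
  then show "J0 n x y z = 0" by (simp add: J0_def)
next
  fix x y z assume ch: "(x,y,z) \<in> chains3 (Pn n) pn_le"
  define A where "A = {a\<in>Pn n. pn_le x a \<and> pn_le a y}"
  define B where "B = {b\<in>Pn n. pn_le y b \<and> pn_le b z}"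
  have eq: "{(a,b). a \<in> Pn n \<and> b \<in> Pn n \<and> pn_le x a \<and> pn_le a y \<and> pn_le y b \<and> pn_le b z} = A \<times> B"
    by (auto simp: A_def B_def)
  have "(\<Sum>(a,b)\<in>A \<times> B. J0 n a y b) = (\<Sum>(a,b)\<in>A \<times> B. mu n a y * mu n y b)"
    using ch by (intro sum.cong) (auto simp: A_def B_def J0_def chains3_def)
  also have "\<dots> = (\<Sum>a\<in>A. mu n a y) * (\<Sum>b\<in>B. mu n y b)"
    by (simp add: sum_product sum.cartesian_product)
  also have "\<dots> = delta3 x y z"
    using ch unfolding A_def B_def
    by (simp add: mu_down mu_up chains3_def delta3_def)
  finally show "(\<Sum>(a,b)\<in>{(a,b). a \<in> Pn n \<and> b \<in> Pn n \<and> pn_le x a \<and> pn_le a y \<and> pn_le y b \<and> pn_le b z}. J0 n a y b) = delta3 x y z"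
    using eq by simp
qed

lemma J_fun_Pn: "J_fun (Pn n) pn_le = J0 n"
  unfolding J_fun_def
proof (rule the_equality)
  show "is_J (Pn n) pn_le (J0 n)" by (rule J0_is_J)
  fix f assume fJ: "is_J (Pn n) pn_le f"
  show "f = J0 n"
  proof (rule is_J_unique[OF finite_Pn _ _ _ fJ J0_is_J])
    show "pn_le x x" for x by (cases x) auto
    show "x = y" if "pn_le x y" "pn_le y x" for x y using that by (cases x; cases y) auto
    show "pn_le x z" if "pn_le x y" "pn_le y z" for x y z using that by (cases x; cases y; cases z) auto
  qed
qed


lemma cond_split: "(if P \<and> Q then a else (0::'b::zero)) = (if P then if Q then a else 0 else 0)"
  by simp
lemma sum_if_const: "(\<Sum>k\<in>A. if P then g k else (0::'b::comm_monoid_add)) = (if P then sum g A else 0)"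
  by simp

lemma max_rank_Pn: "max_rank (Pn n) pn_rk = 2"
  unfolding max_rank_def
proof (rule Max_eqI)
  show "finite (pn_rk ` Pn n)" by simp
  have "pn_rk x \<le> 2" for x by (cases x) auto
  then show "y \<le> 2" if "y \<in> pn_rk ` Pn n" for y using that by auto
  show "2 \<in> pn_rk ` Pn n" using BT_in_Pn(2) by (metis image_eqI pn_rk.simps(3))
qed

lemma chains_sum:
  assumes "finite S"
  shows "(\<Sum>(x,y,z)\<in>chains3 S le. F x y z) =
    (\<Sum>x\<in>S. \<Sum>y\<in>S. \<Sum>z\<in>S. if le x y \<and> le y z then F x y z else 0)"
proof -
  have "(\<Sum>(x,y,z)\<in>chains3 S le. F x y z) = (\<Sum>(x,y,z)\<in>S\<times>S\<times>S. if le x y \<and> le y z then F x y z else 0)"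
    by (rule sum.mono_neutral_cong_left) (auto simp: chains3_def assms split: if_splits)
  also have "\<dots> = (\<Sum>x\<in>S. \<Sum>y\<in>S. \<Sum>z\<in>S. if le x y \<and> le y z then F x y z else 0)"
    by (simp add: sum.cartesian_product)
  finally show ?thesis .
qed

theorem proposition6p9:
  fixes n :: nat
  assumes "n \<ge> 2"
  shows "M_poly (Pn n) pn_le pn_rk
           = [:1, - of_nat n, 1:] * [:1, 1:] ^ 2 * [:-1, 1:] ^ 2"
proof -
  have "poly (M_poly (Pn n) pn_le pn_rk) t = poly ([:1, - of_nat n, 1:] * [:1, 1:] ^ 2 * [:-1, 1:] ^ 2) t" for t
  proof -
    have "poly (M_poly (Pn n) pn_le pn_rk) t =
       (\<Sum>(x,y,z)\<in>chains3 (Pn n) pn_le. J0 n x y z * t ^ (6 - pn_rk x - pn_rk y - pn_rk z))"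
      unfolding M_poly_def J_fun_Pn max_rank_Pn poly_sum
      by (simp add: split_def poly_monom)
    also have "\<dots> = (\<Sum>x\<in>Pn n. \<Sum>y\<in>Pn n. \<Sum>z\<in>Pn n. if pn_le x y \<and> pn_le y z then
         mu n x y * mu n y z * t ^ (6 - pn_rk x - pn_rk y - pn_rk z) else 0)"
      unfolding chains_sum[OF finite_Pn]
      by (intro sum.cong refl) (simp add: J0_def chains3_def)
    also have "\<dots> = t^6 - of_nat n * t^5 - t^4 + 2 * of_nat n * t^3 - t^2 - of_nat n * t + 1"
      by (simp add: sum_Pn cond_split sum_if_const sum.delta sum.delta' algebra_simps)
    also have "\<dots> = poly ([:1, - of_nat n, 1:] * [:1, 1:] ^ 2 * [:-1, 1:] ^ 2) t"
      by (simp add: algebra_simps power2_eq_square eval_nat_numeral)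
    finally show ?thesis .
  qed
  then show ?thesis using poly_eq_poly_eq_iff by blast
qed

end
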